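(* Let $\pi$ be a supercuspidal representation of $G$ with trivial central character and $a(\pi)=4n$, $n\ge1$, let $T$ be an inert torus in canonical form, let $\chi_\pi=\chi_{\theta_\pi,T}$, and let $v_0\in\pi$ be a minimal vector for $T$. Let $\Phi_0(g)=\langle\pi(g)v_0,v_0\rangle/\langle v_0,v_0\rangle$, where $\langle\cdot,\cdot\rangle$ is a $G$-invariant inner product on $\pi$. Then $\Phi_0(g)=\chi_\pi(g)$ for $g\in ZK_T(n)$ and $\Phi_0(g)=0$ for $g\notin ZK_T(n)$.
   Context: $F$ is a non-archimedean local field of characteristic zero with ring of integers $\mathfrak o$, maximal ideal $\mathfrak p$, uniformizer $\varpi$, odd residue cardinality; $E$ the unramified quadratic extension; $G=\mathrm{GL}_2(F)$, $Z$ its centre. $\psi$ is an additive character of $F$ trivial on $\mathfrak o$ but not $\varpi^{-1}\mathfrak o$, $\psi_E=\psi\circ\mathrm{Tr}_{E/F}$. $a(\pi)$ is the conductor exponent of $\pi$; for a character $\chi$ of $E^\times$, $a(\chi)$ is the least $m\ge0$ with $\chi$ trivial on $\{x\in\mathfrak o_E^\times:v(x-1)\ge m\}$. Inert torus in canonical form: $T=T_\alpha=\{\begin{pmatrix}x&y\\-\alpha y&x\end{pmatrix}\ne0\}$, $\alpha\in\mathfrak o^\times$, $-\alpha$ non-square, identified with $E^\times$ via $x+y\sqrt{-\alpha}\mapsto\begin{pmatrix}x&y\\-\alpha y&x\end{pmatrix}$; $w_\alpha=\begin{pmatrix}0&1\\-\alpha&0\end{pmatrix}$; $K(n)=\{g\in\mathrm{GL}_2(\mathfrak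 o):g\equiv1\bmod\mathfrak p^n\}$; $K_T(n)=\{\begin{pmatrix}a&b\\c&d\end{pmatrix}\in\mathrm{GL}_2(\mathfrak o):a-d,\ c+b\alpha\in\mathfrak p^n\}$, $ZK_T(n)=TK(n)$. For $\theta$ with $a(\theta)=2n$, $\theta|_{F^\times}=1$: fix $a_{\theta,T}\in\mathfrak o^\times$ with $\psi_E(\varpi^{-n}a_{\theta,T}\sqrt{-\alpha}u)=\theta(1+\varpi^nu)$ ($u\in\mathfrak o_E$), and $\chi_{\theta,T}(t(1+\varpi^ng))=\theta(t)\psi(\varpi^{-n}a_{\theta,T}\mathrm{Tr}(w_\alpha g))$, a character of $ZK_T(n)$. $\theta_\pi$ is a fixed character of $E^\times$ with $a(\theta_\pi)=2n$, $\theta_\pi|_{F^\times}=1$ and $\pi\simeq c\text{-}\mathrm{Ind}_{ZK_T(n)}^G\chi_{\theta_\pi,T}$ for all such $T$. A minimal vector for $T$ is a nonzero $v\in\pi$ with $\pi(k)v=\chi_{\theta_\pi,T}(k)v$ for all $k\in ZK_T(n)$. *)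

theory Defs
  imports "HOL-Analysis.Analysis"
begin

text \<open>
  The local field F is a type 'f of class field_char_0 together
  with a normalized discrete valuation nu (its value at 0 is irrelevant; every
  use is guarded by nonzeroness).  Matrices are elements of 'f^2^2.
  The unramified quadratic extension E is realised as pairs (x,y) standing for
  x + y sqrt(-alpha), which is exactly the identification of E^x with T_alpha.
\<close>

definition inP :: "('f::field \<Rightarrow> int) \<Rightarrow> int \<Rightarrow> 'f \<Rightarrow> bool" where
  "inP nu k x \<longleftrightarrow> x = 0 \<or> k \<le> nu x"

definition inO :: "('f::field \<Rightarrow> int) \<Rightarrow> 'f \<Rightarrow> bool" where
  "inO nu x \<longleftrightarrow> inP nu 0 x"

definition isUnit :: "('f::field \<Rightarrow> int) \<Rightarrow> 'f \<Rightarrow> bool" where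
  "isUnit nu x \<longleftrightarrow> x \<noteq> 0 \<and> nu x = 0"

definition residue_card :: "('f::field \<Rightarrow> int) \<Rightarrow> nat" where
  "residue_card nu = card ({x. inO nu x} // {(x,y). inO nu x \<and> inO nu y \<and> inP nu 1 (x - y)})"

definition nonarch_local_field :: "('f::field_char_0 \<Rightarrow> int) \<Rightarrow> bool" where
  "nonarch_local_field nu \<longleftrightarrow>
     (\<forall>x y. x \<noteq> 0 \<longrightarrow> y \<noteq> 0 \<longrightarrow> nu (x * y) = nu x + nu y) \<and>
     (\<forall>x y. x \<noteq> 0 \<longrightarrow> y \<noteq> 0 \<longrightarrow> x + y \<noteq> 0 \<longrightarrow> min (nu x) (nu y) \<le> nu (x + y)) \<and>
     (\<exists>w. w \<noteq> 0 \<and> nu w = 1) \<and>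
     (\<forall>s :: nat \<Rightarrow> 'f. (\<forall>k. \<exists>N. \<forall>m\<ge>N. \<forall>m'\<ge>N. inP nu k (s m - s m')) \<longrightarrow>
          (\<exists>L. \<forall>k. \<exists>N. \<forall>m\<ge>N. inP nu k (s m - L))) \<and>
     finite ({x. inO nu x} // {(x,y). inO nu x \<and> inO nu y \<and> inP nu 1 (x - y)})"

definition std_add_char :: "('f::field \<Rightarrow> int) \<Rightarrow> 'f \<Rightarrow> ('f \<Rightarrow> complex) \<Rightarrow> bool" where
  "std_add_char nu w psi \<longleftrightarrow>
     (\<forall>x y. psi (x + y) = psi x * psi y) \<and>
     (\<forall>x. inO nu x \<longrightarrow> psi x = 1) \<and>
     (\<exists>x. inO nu x \<and> psi (inverse w * x) \<noteq> 1)"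

definition emul :: "'f::field \<Rightarrow> 'f \<times> 'f \<Rightarrow> 'f \<times> 'f \<Rightarrow> 'f \<times> 'f" where
  "emul alpha z z' = (fst z * fst z' - alpha * snd z * snd z', fst z * snd z' + snd z * fst z')"

definition etr :: "'f::field \<times> 'f \<Rightarrow> 'f" where
  "etr z = 2 * fst z"

definition enorm :: "'f::field \<Rightarrow> 'f \<times> 'f \<Rightarrow> 'f" where
  "enorm alpha z = fst z ^ 2 + alpha * snd z ^ 2"

definition EU :: "('f::field \<Rightarrow> int) \<Rightarrow> 'f \<Rightarrow> nat \<Rightarrow> ('f \<times> 'f) set" where
  "EU nu alpha m = {z. inO nu (fst z) \<and> inO nu (snd z) \<and> isUnit nu (enorm alpha z)
                      \<and> inP nu (int m) (fst z - 1) \<and> inP nu (int m) (snd z)}"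

definition char_E :: "('f::field \<Rightarrow> int) \<Rightarrow> 'f \<Rightarrow> ('f \<times> 'f \<Rightarrow> complex) \<Rightarrow> bool" where
  "char_E nu alpha theta \<longleftrightarrow>
     (\<forall>z w. z \<noteq> (0,0) \<longrightarrow> w \<noteq> (0,0) \<longrightarrow> theta (emul alpha z w) = theta z * theta w) \<and>
     (\<forall>z. z \<noteq> (0,0) \<longrightarrow> theta z \<noteq> 0) \<and>
     (\<exists>m. \<forall>z\<in>EU nu alpha m. theta z = 1)"

definition cond_E :: "('f::field \<Rightarrow> int) \<Rightarrow> 'f \<Rightarrow> ('f \<times> 'f \<Rightarrow> complex) \<Rightarrow> nat" where
  "cond_E nu alpha theta = (LEAST m. \<forall>z\<in>EU nu alpha m. theta z = 1)"

definition mk2 :: "'a \<Rightarrow> 'a \<Rightarrow> 'a \<Rightarrow> 'a \<Rightarrow> 'a^2^2" where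
  "mk2 a b c d = (\<chi> i j. if i = 1 then (if j = 1 then a else b) else (if j = 1 then c else d))"

definition GL2 :: "('f::field^2^2) set" where
  "GL2 = {g. det g \<noteq> 0}"

definition centre :: "('f::field^2^2) set" where
  "centre = {mat z | z. z \<noteq> 0}"

definition M2o :: "('f::field \<Rightarrow> int) \<Rightarrow> ('f^2^2) set" where
  "M2o nu = {g. \<forall>i j. inO nu (g $ i $ j)}"

definition GL2o :: "('f::field \<Rightarrow> int) \<Rightarrow> ('f^2^2) set" where
  "GL2o nu = {g. g \<in> M2o nu \<and> isUnit nu (det g)}"

definition Kn :: "('f::field \<Rightarrow> int) \<Rightarrow> nat \<Rightarrow> ('f^2^2) set" where
  "Kn nu n = {g \<in> GL2o nu. \<forall>i j. inP nu (int n) ((g - mat 1) $ i $ j)}"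

definition K1 :: "('f::field \<Rightarrow> int) \<Rightarrow> nat \<Rightarrow> ('f^2^2) set" where
  "K1 nu m = {g \<in> GL2o nu. inP nu (int m) (g $ 2 $ 1) \<and> inP nu (int m) (g $ 2 $ 2 - 1)}"

definition torus :: "'f::field \<Rightarrow> ('f^2^2) set" where
  "torus alpha = {mk2 x y (- alpha * y) x | x y. (x, y) \<noteq> (0, 0)}"

definition w_alpha :: "'f::field \<Rightarrow> 'f^2^2" where
  "w_alpha alpha = mk2 0 1 (- alpha) 0"

definition KT :: "('f::field \<Rightarrow> int) \<Rightarrow> 'f \<Rightarrow> nat \<Rightarrow> ('f^2^2) set" where
  "KT nu alpha n = {g \<in> GL2o nu. inP nu (int n) (g $ 1 $ 1 - g $ 2 $ 2)
                               \<and> inP nu (int n) (g $ 2 $ 1 + g $ 1 $ 2 * alpha)}"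

definition ZKT :: "('f::field \<Rightarrow> int) \<Rightarrow> 'f \<Rightarrow> nat \<Rightarrow> ('f^2^2) set" where
  "ZKT nu alpha n = {z ** k | z k. z \<in> centre \<and> k \<in> KT nu alpha n}"

definition chiT :: "('f::field \<Rightarrow> int) \<Rightarrow> 'f \<Rightarrow> 'f \<Rightarrow> ('f \<Rightarrow> complex) \<Rightarrow> ('f \<times> 'f \<Rightarrow> complex)
                    \<Rightarrow> 'f \<Rightarrow> nat \<Rightarrow> 'f^2^2 \<Rightarrow> complex" where
  "chiT nu w alpha psi theta a n k =
     (SOME c. \<exists>x y g. (x, y) \<noteq> (0, 0) \<and> g \<in> M2o nu \<and>
        k = mk2 x y (- alpha * y) x ** (mat 1 + mat (w ^ n) ** g) \<and>
        c = theta (x, y) * psi (inverse w ^ n * a * trace (w_alpha alpha ** g)))"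

text \<open>The compactly induced representation c-Ind_H^G chi: functions on G, left
  (H,chi)-equivariant, supported on finitely many cosets H s (i.e. compactly
  supported modulo Z, as H is open and compact mod Z); G acts by right translation.\<close>
definition cind :: "('f::field^2^2) set \<Rightarrow> ('f^2^2 \<Rightarrow> complex) \<Rightarrow> ('f^2^2 \<Rightarrow> complex) set" where
  "cind H chi = {f. (\<forall>g. g \<notin> GL2 \<longrightarrow> f g = 0) \<and>
                    (\<forall>h\<in>H. \<forall>g\<in>GL2. f (h ** g) = chi h * f g) \<and>
                    (\<exists>S. finite S \<and> S \<subseteq> GL2 \<and> (\<forall>g. f g \<noteq> 0 \<longrightarrow> (\<exists>h\<in>H. \<exists>s\<in>S. g = h ** s)))}"

definition is_rep :: "(complex \<Rightarrow> 'v::ab_group_add \<Rightarrow> 'v) \<Rightarrow> ('f::field^2^2 \<Rightarrow> 'v \<Rightarrow> 'v) \<Rightarrow> bool" where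
  "is_rep sc rho \<longleftrightarrow> vector_space sc \<and>
     (\<forall>g\<in>GL2. \<forall>v w. rho g (v + w) = rho g v + rho g w) \<and>
     (\<forall>g\<in>GL2. \<forall>c v. rho g (sc c v) = sc c (rho g v)) \<and>
     rho (mat 1) = id \<and>
     (\<forall>g\<in>GL2. \<forall>h\<in>GL2. rho (g ** h) = rho g \<circ> rho h)"

definition smooth_rep :: "('f::field \<Rightarrow> int) \<Rightarrow> ('f^2^2 \<Rightarrow> 'v \<Rightarrow> 'v) \<Rightarrow> bool" where
  "smooth_rep nu rho \<longleftrightarrow> (\<forall>v. \<exists>m. \<forall>k\<in>Kn nu m. rho k v = v)"

definition irreducible_rep :: "(complex \<Rightarrow> 'v::ab_group_add \<Rightarrow> 'v) \<Rightarrow> ('f::field^2^2 \<Rightarrow> 'v \<Rightarrow> 'v) \<Rightarrow> bool" where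
  "irreducible_rep sc rho \<longleftrightarrow> (\<exists>v::'v. v \<noteq> 0) \<and>
     (\<forall>W. module.subspace sc W \<longrightarrow> (\<forall>g\<in>GL2. rho g ` W \<subseteq> W) \<longrightarrow> W = {0} \<or> W = UNIV)"

definition invariant_inner_product ::
  "(complex \<Rightarrow> 'v::ab_group_add \<Rightarrow> 'v) \<Rightarrow> ('f::field^2^2 \<Rightarrow> 'v \<Rightarrow> 'v) \<Rightarrow> ('v \<Rightarrow> 'v \<Rightarrow> complex) \<Rightarrow> bool" where
  "invariant_inner_product sc rho ip \<longleftrightarrow>
     (\<forall>u v w. ip (u + v) w = ip u w + ip v w) \<and>
     (\<forall>c v w. ip (sc c v) w = c * ip v w) \<and>
     (\<forall>v w. ip w v = cnj (ip v w)) \<and>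
     (\<forall>v. v \<noteq> 0 \<longrightarrow> Im (ip v v) = 0 \<and> 0 < Re (ip v v)) \<and>
     (\<forall>g\<in>GL2. \<forall>v w. ip (rho g v) (rho g w) = ip v w)"

text \<open>Supercuspidal: irreducible, smooth, and matrix coefficients compactly supported
  modulo the centre (equivalently: contained in finitely many cosets Z GL_2(o) s).\<close>
definition supercuspidal ::
  "('f::field \<Rightarrow> int) \<Rightarrow> (complex \<Rightarrow> 'v::ab_group_add \<Rightarrow> 'v) \<Rightarrow> ('f^2^2 \<Rightarrow> 'v \<Rightarrow> 'v) \<Rightarrow> ('v \<Rightarrow> 'v \<Rightarrow> complex) \<Rightarrow> bool" where
  "supercuspidal nu sc rho ip \<longleftrightarrow> irreducible_rep sc rho \<and> smooth_rep nu rho \<and>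
     (\<forall>v w. \<exists>S. finite S \<and> S \<subseteq> GL2 \<and>
        (\<forall>g\<in>GL2. ip (rho g v) w \<noteq> 0 \<longrightarrow> (\<exists>z\<in>centre. \<exists>k\<in>GL2o nu. \<exists>s\<in>S. g = z ** k ** s)))"

definition conductor :: "('f::field \<Rightarrow> int) \<Rightarrow> ('f^2^2 \<Rightarrow> 'v::zero \<Rightarrow> 'v) \<Rightarrow> nat" where
  "conductor nu rho = (LEAST m. \<exists>v. v \<noteq> 0 \<and> (\<forall>k\<in>K1 nu m. rho k v = v))"

definition minimal_vector :: "(complex \<Rightarrow> 'v \<Rightarrow> 'v) \<Rightarrow> ('f::field^2^2 \<Rightarrow> 'v::zero \<Rightarrow> 'v)
     \<Rightarrow> ('f^2^2) set \<Rightarrow> ('f^2^2 \<Rightarrow> complex) \<Rightarrow> 'v \<Rightarrow> bool" where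
  "minimal_vector sc rho H chi v \<longleftrightarrow> v \<noteq> 0 \<and> (\<forall>k\<in>H. rho k v = sc (chi k) v)"

end

theory Submission
  imports Defs
begin


lemma two_ne: "(1::2) \<noteq> 2" by simp

lemma mk2_nth[simp]:
  "mk2 a b c d $ 1 $ 1 = a" "mk2 a b c d $ 1 $ 2 = b"
  "mk2 a b c d $ 2 $ 1 = c" "mk2 a b c d $ 2 $ 2 = d"
  by (simp_all add: mk2_def)

lemma mk2_eta: "(g::'a^2^2) = mk2 (g$1$1) (g$1$2) (g$2$1) (g$2$2)"
  unfolding vec_eq_iff forall_2 by simp

lemma mk2_eq_iff: "mk2 a b c d = mk2 a' b' c' d' \<longleftrightarrow> a = a' \<and> b = b' \<and> c = c' \<and> d = d'"
  unfolding vec_eq_iff forall_2 by simp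

lemma mk2_mult: "mk2 a b c d ** mk2 a' b' c' d' =
   mk2 (a*a'+b*c') (a*b'+b*d') (c*a'+d*c') (c*b'+d*d'::'a::semiring_1)"
  unfolding vec_eq_iff forall_2 by (simp add: matrix_matrix_mult_def sum_2)

lemma mat_mk2: "mat z = mk2 z 0 0 (z::'a::zero)"
  unfolding vec_eq_iff forall_2 by (simp add: mat_def)

lemma mk2_add: "mk2 a b c d + mk2 a' b' c' d' = mk2 (a+a') (b+b') (c+c') (d+(d'::'a::plus))"
  unfolding vec_eq_iff forall_2 by simp

lemma mk2_diff: "mk2 a b c d - mk2 a' b' c' d' = mk2 (a-a') (b-b') (c-c') (d-(d'::'a::minus))"
  unfolding vec_eq_iff forall_2 by simp

lemma det_mk2: "det (mk2 a b c d) = a*d - b*(c::'a::comm_ring_1)"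
  by (simp add: det_2)

lemma trace_mk2: "trace (mk2 a b c d) = a + (d::'a::semiring_1)"
  by (simp add: trace_def sum_2)



locale vf = fixes nu :: "'f::field_char_0 \<Rightarrow> int" assumes F: "nonarch_local_field nu"
begin

lemma nu_mult: "x \<noteq> 0 \<Longrightarrow> y \<noteq> 0 \<Longrightarrow> nu (x*y) = nu x + nu y"
  using F unfolding nonarch_local_field_def by blast

lemma ultra: "x \<noteq> 0 \<Longrightarrow> y \<noteq> 0 \<Longrightarrow> x + y \<noteq> 0 \<Longrightarrow> min (nu x) (nu y) \<le> nu (x+y)"
  using F unfolding nonarch_local_field_def by blast

lemma nu1[simp]: "nu 1 = 0"
  using nu_mult[of 1 1] by simp

lemma num1[simp]: "nu (-1) = 0"
  using nu_mult[of "-1" "-1"] by simp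

lemma nu_neg[simp]: "nu (-x) = nu x"
proof (cases "x = 0")
  case False thus ?thesis using nu_mult[of "-1" x] by simp
qed simp

lemma nu_inv: "x \<noteq> 0 \<Longrightarrow> nu (inverse x) = - nu x"
  using nu_mult[of x "inverse x"] by simp

lemma nu_div: "x \<noteq> 0 \<Longrightarrow> y \<noteq> 0 \<Longrightarrow> nu (x / y) = nu x - nu y"
  by (simp add: divide_inverse nu_mult nu_inv)

lemma nu_pow: "x \<noteq> 0 \<Longrightarrow> nu (x ^ k) = int k * nu x"
  by (induction k) (auto simp: nu_mult algebra_simps)

lemma inP_0[simp]: "inP nu k 0" by (simp add: inP_def)

lemma inP_neg[simp]: "inP nu k (-x) \<longleftrightarrow> inP nu k x" by (simp add: inP_def)

lemma inP_add: "inP nu k x \<Longrightarrow> inP nu k y \<Longrightarrow> inP nu k (x + y)"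
proof -
  assume a: "inP nu k x" "inP nu k y"
  show ?thesis
  proof (cases "x = 0 \<or> y = 0 \<or> x + y = 0")
    case True thus ?thesis using a by (auto simp: inP_def)
  next
    case False
    hence "min (nu x) (nu y) \<le> nu (x+y)" using ultra[of x y] by auto
    thus ?thesis using a False by (auto simp: inP_def)
  qed
qed

lemma inP_diff: "inP nu k x \<Longrightarrow> inP nu k y \<Longrightarrow> inP nu k (x - y)"
  using inP_add[of k x "-y"] by simp

lemma inP_mult: "inP nu j x \<Longrightarrow> inP nu k y \<Longrightarrow> inP nu (j + k) (x * y)"
  unfolding inP_def by (cases "x = 0 \<or> y = 0") (auto simp: nu_mult)

lemma inP_mono: "inP nu k x \<Longrightarrow> j \<le> k \<Longrightarrow> inP nu j x"
  unfolding inP_def by auto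

lemma inP_mult0: "inO nu x \<Longrightarrow> inP nu k y \<Longrightarrow> inP nu k (x * y)"
  using inP_mult[of 0 x k y] by (simp add: inO_def)

lemma inP_mult0': "inP nu k y \<Longrightarrow> inO nu x \<Longrightarrow> inP nu k (y * x)"
  using inP_mult0[of x k y] by (simp add: mult.commute)

lemma inO_add: "inO nu x \<Longrightarrow> inO nu y \<Longrightarrow> inO nu (x + y)"
  unfolding inO_def by (rule inP_add)
lemma inO_diff: "inO nu x \<Longrightarrow> inO nu y \<Longrightarrow> inO nu (x - y)"
  unfolding inO_def by (rule inP_diff)
lemma inO_mult: "inO nu x \<Longrightarrow> inO nu y \<Longrightarrow> inO nu (x * y)"
  unfolding inO_def using inP_mult[of 0 x 0 y] by simp
lemma inO_neg[simp]: "inO nu (-x) \<longleftrightarrow> inO nu x" by (simp add: inO_def)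
lemma inO_0[simp]: "inO nu 0" by (simp add: inO_def)
lemma inO_1[simp]: "inO nu 1" by (simp add: inO_def inP_def)
lemma inO_pow: "inO nu x \<Longrightarrow> inO nu (x ^ k)"
  by (induction k) (auto intro: inO_mult)

lemma inP_iff: "x \<noteq> 0 \<Longrightarrow> inP nu k x \<longleftrightarrow> k \<le> nu x" by (simp add: inP_def)

lemma ultra_eq: "x \<noteq> 0 \<Longrightarrow> inP nu (nu x + 1) y \<Longrightarrow> nu (x + y) = nu x"
proof -
  assume x: "x \<noteq> 0" and y: "inP nu (nu x + 1) y"
  show ?thesis
  proof (cases "y = 0")
    case True thus ?thesis by simp
  next
    case False
    hence ny: "nu y > nu x" using y by (simp add: inP_def)
    have s: "x + y \<noteq> 0" using ny by (metis add_eq_0_iff nu_neg less_irrefl)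
    have "nu (x + y) \<ge> nu x" using ultra[OF x False s] ny by simp
    moreover have "nu x \<ge> min (nu (x+y)) (nu y)" using ultra[of "x+y" "-y"] s False x by simp
    ultimately show ?thesis using ny by linarith
  qed
qed

lemma isUnit_mult: "isUnit nu x \<Longrightarrow> isUnit nu y \<Longrightarrow> isUnit nu (x*y)"
  by (simp add: isUnit_def nu_mult)

lemma isUnit_inO: "isUnit nu x \<Longrightarrow> inO nu x"
  by (simp add: isUnit_def inO_def inP_def)

lemma isUnit_plus: "isUnit nu x \<Longrightarrow> inP nu 1 e \<Longrightarrow> isUnit nu (x + e)"
proof -
  assume x: "isUnit nu x" and e: "inP nu 1 e"
  have "x + e \<noteq> 0"
  proof
    assume "x + e = 0"
    hence "e = -x" by (simp add: eq_neg_iff_add_eq_0 add.commute)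
    thus False using x e by (simp add: isUnit_def inP_def)
  qed
  thus ?thesis using ultra_eq[of x e] x e unfolding isUnit_def by auto
qed

lemma isUnit_1[simp]: "isUnit nu 1" by (simp add: isUnit_def)

lemma isUnit_one_plus: "inP nu 1 e \<Longrightarrow> isUnit nu (1 + e)"
  using isUnit_plus[of 1 e] by simp

lemma isUnit_inv: "isUnit nu x \<Longrightarrow> isUnit nu (inverse x)"
  by (simp add: isUnit_def nu_inv)

end


lemma even_inv: "finite A \<Longrightarrow> (\<forall>x\<in>A. f x \<in> A \<and> f (f x) = x \<and> f x \<noteq> x) \<Longrightarrow> even (card A)"
proof (induction "card A" arbitrary: A rule: less_induct)
  case less
  show ?case
  proof (cases "A = {}")
    case True thus ?thesis by simp
  next
    case False
    then obtain x where x: "x \<in> A" by blast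
    define B where "B = A - {x, f x}"
    have fx: "f x \<in> A" "f x \<noteq> x" using less.prems x by auto
    have c2: "card {x, f x} \<le> card A" by (rule card_mono) (use less.prems(1) x fx in auto)
    have cB: "card A = card B + 2"
      using fx x less.prems(1) c2 unfolding B_def by (simp add: card_Diff_subset)
    have "\<forall>y\<in>B. f y \<in> B \<and> f (f y) = y \<and> f y \<noteq> y"
    proof
      fix y assume y: "y \<in> B"
      hence yA: "y \<in> A" "y \<noteq> x" "y \<noteq> f x" by (auto simp: B_def)
      have "f y \<noteq> x" using yA less.prems(2) by metis
      moreover have "f y \<noteq> f x" using yA x less.prems(2) by metis
      ultimately show "f y \<in> B \<and> f (f y) = y \<and> f y \<noteq> y" using yA less.prems(2) by (auto simp: B_def)
    qed
    moreover have "finite B" using less.prems(1) by (simp add: B_def)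
    ultimately have "even (card B)" using less.hyps cB by simp
    thus ?thesis using cB by simp
  qed
qed

context vf
begin

lemma nonunit_inP1: "inO nu x \<Longrightarrow> \<not> isUnit nu x \<Longrightarrow> inP nu 1 x"
  by (auto simp: inO_def inP_def isUnit_def)

lemma two_unit:
  assumes q: "odd (residue_card nu)"
  shows "isUnit nu 2"
proof (rule ccontr)
  assume nu2: "\<not> isUnit nu 2"
  have "inO nu (2::'f)" using inO_add[OF inO_1 inO_1] by (simp add: one_add_one)
  hence two: "inP nu 1 (2::'f)" using nu2 nonunit_inP1 by blast
  define Oo where "Oo = {x::'f. inO nu x}"
  define R where "R = {(x::'f,y). inO nu x \<and> inO nu y \<and> inP nu 1 (x - y)}"
  have eq: "equiv Oo R"
    unfolding equiv_def refl_on_def sym_def trans_def Oo_def R_def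
  proof (intro conjI allI impI)
    fix x y assume "(x, y) \<in> {(x, y). inO nu x \<and> inO nu y \<and> inP nu 1 (x - y)}"
    thus "(y, x) \<in> {(x, y). inO nu x \<and> inO nu y \<and> inP nu 1 (x - y)}"
      using inP_neg[of 1 "x - y"] by auto
  next
    fix x y z assume "(x, y) \<in> {(x, y). inO nu x \<and> inO nu y \<and> inP nu 1 (x - y)}"
      "(y, z) \<in> {(x, y). inO nu x \<and> inO nu y \<and> inP nu 1 (x - y)}"
    thus "(x, z) \<in> {(x, y). inO nu x \<and> inO nu y \<and> inP nu 1 (x - y)}"
      using inP_add[of 1 "x - y" "y - z"] by auto
  qed auto
  have Oplus: "x \<in> Oo \<Longrightarrow> x + c \<in> Oo" if "inO nu c" for x c
    using inO_add that by (auto simp: Oo_def)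
  have img: "(\<lambda>y. y + 1) ` (R``{x}) = R``{x+1}" if "x \<in> Oo" for x
  proof
    show "(\<lambda>y. y + 1) ` (R``{x}) \<subseteq> R``{x+1}"
      using that by (auto simp: R_def Oo_def intro: inO_add)
    show "R``{x+1} \<subseteq> (\<lambda>y. y + 1) ` (R``{x})"
    proof
      fix z assume "z \<in> R``{x+1}"
      hence z: "inO nu z" "inP nu 1 (x + 1 - z)" by (auto simp: R_def)
      have "z - 1 \<in> R``{x}" using z that by (auto simp: R_def Oo_def intro: inO_diff simp: algebra_simps)
      moreover have "z = (z - 1) + 1" by simp
      ultimately show "z \<in> (\<lambda>y. y + 1) ` (R``{x})" by blast
    qed
  qed
  define f :: "'f set \<Rightarrow> 'f set" where "f = (\<lambda>C. (\<lambda>y. y + 1) ` C)"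
  have "even (card (Oo // R))"
  proof (rule even_inv[of "Oo // R" f])
    show "finite (Oo // R)" using F unfolding nonarch_local_field_def Oo_def R_def by blast
    show "\<forall>C\<in>Oo // R. f C \<in> Oo // R \<and> f (f C) = C \<and> f C \<noteq> C"
    proof
      fix C assume "C \<in> Oo // R"
      then obtain x where C: "C = R``{x}" "x \<in> Oo" by (auto elim: quotientE)
      have x1: "x + 1 \<in> Oo" by (rule Oplus[OF _ C(2)]) simp
      have x2: "x + 1 + 1 \<in> Oo" by (rule Oplus[OF _ x1]) simp
      have fC: "f C = R``{x+1}" using img C by (simp add: f_def)
      have ffC: "f (f C) = R``{x+1+1}" using img x1 fC by (simp add: f_def)
      have "(x + 1 + 1, x) \<in> R" using x2 C(2) two by (auto simp: R_def Oo_def one_add_one)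
      hence "R``{x+1+1} = R``{x}" using eq equiv_class_eq_iff by metis
      moreover have "(x + 1, x) \<notin> R" by (auto simp: R_def inP_def)
      hence "R``{x+1} \<noteq> R``{x}" using eq_equiv_class_iff[OF eq x1 C(2)] by simp
      ultimately show "f C \<in> Oo // R \<and> f (f C) = C \<and> f C \<noteq> C"
        using fC ffC C x1 by (auto intro: quotientI)
    qed
  qed
  thus False using q unfolding residue_card_def Oo_def R_def by simp
qed

lemma unit_div: "inP nu k e \<Longrightarrow> isUnit nu u \<Longrightarrow> inP nu k (e / u)"
  using inP_mult0'[of k e "inverse u"] isUnit_inO[OF isUnit_inv] by (simp add: divide_inverse)

lemma hensel:
  assumes two: "isUnit nu (2::'f)" and al: "isUnit nu alpha"
    and s: "isUnit nu s" "inP nu 1 (s^2 + alpha)"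
  shows "\<exists>L. L^2 = - alpha"
proof -
  define S where "S = rec_nat s (\<lambda>_ t. t - (t^2 + alpha) / (2 * t))"
  have S0: "S 0 = s" and SS: "\<And>k. S (Suc k) = S k - (S k ^2 + alpha) / (2 * S k)"
    by (simp_all add: S_def)
  have inv: "isUnit nu (S k) \<and> inP nu (int k + 1) (S k ^ 2 + alpha)" for k
  proof (induction k)
    case 0 thus ?case using s by (simp add: S0)
  next
    case (Suc k)
    define e where "e = S k ^ 2 + alpha"
    have u: "isUnit nu (S k)" and e: "inP nu (int k + 1) e" using Suc by (auto simp: e_def)
    have u2: "isUnit nu (2 * S k)" using isUnit_mult[OF two u] .
    have d: "inP nu (int k + 1) (e / (2 * S k))" using unit_div[OF e u2] .
    have "isUnit nu (S k + - (e / (2 * S k)))"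
      by (rule isUnit_plus[OF u]) (use d inP_mono in auto)
    hence U: "isUnit nu (S (Suc k))" by (simp add: SS e_def[symmetric])
    have Sk0: "S k \<noteq> 0" using u by (simp add: isUnit_def)
    have "S (Suc k) ^ 2 + alpha = (e / (2 * S k)) * (e / (2 * S k))"
      unfolding SS e_def[symmetric] using Sk0
      by (simp add: e_def field_simps power2_eq_square)
    moreover have "inP nu (int k + 1 + (int k + 1)) ((e / (2 * S k)) * (e / (2 * S k)))"
      using inP_mult[OF d d] .
    ultimately have "inP nu (int (Suc k) + 1) (S (Suc k) ^ 2 + alpha)"
      using inP_mono by fastforce
    thus ?case using U by simp
  qed
  have step: "inP nu (int k + 1) (S (Suc k) - S k)" for k
  proof -
    have "isUnit nu (2 * S k)" using isUnit_mult[OF two] inv by blast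
    hence "inP nu (int k + 1) ((S k ^2 + alpha) / (2 * S k))" using unit_div inv by blast
    thus ?thesis by (simp add: SS)
  qed
  have far: "inP nu (int N + 1) (S (N + d) - S N)" for N d
  proof (induction d)
    case (Suc d)
    have "inP nu (int N + 1) (S (Suc (N + d)) - S (N + d))"
      using step[of "N+d"] inP_mono by fastforce
    from inP_add[OF this Suc] show ?case by simp
  qed simp
  have cauchy: "\<forall>k. \<exists>N. \<forall>m\<ge>N. \<forall>m'\<ge>N. inP nu k (S m - S m')"
  proof
    fix k :: int
    show "\<exists>N. \<forall>m\<ge>N. \<forall>m'\<ge>N. inP nu k (S m - S m')"
    proof (intro exI allI impI)
      fix m m' assume mm: "nat k \<le> m" "nat k \<le> m'"
      have a: "inP nu (int (nat k) + 1) (S m - S (nat k))"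
        using far[of "nat k" "m - nat k"] mm by simp
      have b: "inP nu (int (nat k) + 1) (S m' - S (nat k))"
        using far[of "nat k" "m' - nat k"] mm by simp
      have "inP nu (int (nat k) + 1) ((S m - S (nat k)) - (S m' - S (nat k)))"
        using inP_diff[OF a b] .
      thus "inP nu k (S m - S m')" using inP_mono by fastforce
    qed
  qed
  then obtain L where L: "\<forall>k. \<exists>N. \<forall>m\<ge>N. inP nu k (S m - L)"
    using F unfolding nonarch_local_field_def by blast
  have all: "inP nu k (L^2 + alpha)" if k0: "k \<ge> 0" for k
  proof -
    obtain N where N: "\<forall>m\<ge>N. inP nu k (S m - L)" using L by blast
    define m where "m = max N (nat k)"
    have d: "inP nu k (S m - L)" using N by (simp add: m_def)
    have Sm: "inO nu (S m)" using inv isUnit_inO by blast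
    have "inO nu (S m - L)" using d inP_mono k0 by (auto simp: inO_def)
    hence Lo: "inO nu L" using inO_diff[OF Sm] by fastforce
    have a: "inP nu k ((L - S m) * (L + S m))"
      using inP_mult0'[of k "L - S m" "L + S m"] d inO_add[OF Lo Sm] inP_neg[of k "S m - L"]
      by simp
    have b: "inP nu k (S m ^2 + alpha)"
      using inv[of m] inP_mono[of "int m + 1" _ k] by (simp add: m_def)
    have eq: "(L - S m) * (L + S m) + (S m ^2 + alpha) = L^2 + alpha"
      by (simp add: algebra_simps power2_eq_square)
    have "inP nu k ((L - S m) * (L + S m) + (S m ^2 + alpha))" by (rule inP_add[OF a b])
    thus ?thesis by (simp only: eq)
  qed
  have "L^2 + alpha = 0"
  proof (rule ccontr)
    assume ne: "L^2 + alpha \<noteq> 0"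
    have "inP nu (max 0 (nu (L^2+alpha)) + 1) (L^2 + alpha)" by (rule all) simp
    thus False using ne by (simp add: inP_def)
  qed
  hence "L^2 = - alpha" by (simp add: eq_neg_iff_add_eq_0)
  thus ?thesis by blast
qed

lemma norm_unit:
  assumes two: "isUnit nu (2::'f)" and al: "isUnit nu alpha" and ns: "\<not> (\<exists>s. s^2 = - alpha)"
    and xy: "inO nu x" "inO nu y" "isUnit nu x \<or> isUnit nu y"
  shows "isUnit nu (x^2 + alpha * y^2)"
proof (rule ccontr)
  assume nu: "\<not> ?thesis"
  have "inO nu (x^2 + alpha * y^2)"
    using xy isUnit_inO[OF al] by (intro inO_add inO_mult inO_pow) auto
  hence p: "inP nu 1 (x^2 + alpha*y^2)" using nonunit_inP1 nu by blast
  show False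
  proof (cases "isUnit nu y")
    case False
    hence x: "isUnit nu x" and y: "inP nu 1 y" using xy nonunit_inP1 by auto
    have "inP nu 1 (alpha * y^2)"
      using inP_mult0[OF isUnit_inO[OF al], of 1 "y^2"] inP_mult[OF y y] inP_mono
      by (fastforce simp: power2_eq_square)
    hence "isUnit nu (x^2 + alpha * y^2)"
      using isUnit_plus[OF isUnit_mult[OF x x]] by (simp add: power2_eq_square)
    thus False using nu by simp
  next
    case True
    define s where "s = x / y"
    have y0: "y \<noteq> 0" using True by (simp add: isUnit_def)
    have so: "inO nu s" using unit_div[of 0 x y] xy True by (simp add: s_def inO_def)
    have e: "s^2 + alpha = (x^2 + alpha*y^2) / (y * y)"
      using y0 by (simp add: s_def field_simps power2_eq_square)
    have sp: "inP nu 1 (s^2 + alpha)" unfolding e by (rule unit_div[OF p isUnit_mult[OF True True]])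
    have su: "isUnit nu s"
    proof (rule ccontr)
      assume "\<not> isUnit nu s"
      hence "inP nu 1 s" using so nonunit_inP1 by blast
      hence "inP nu 1 (s^2)" using inP_mult[of 1 s 1 s] inP_mono by (fastforce simp: power2_eq_square)
      hence "isUnit nu (alpha + s^2)" using isUnit_plus[OF al] by blast
      hence "isUnit nu (s^2 + alpha)" by (simp add: add.commute)
      thus False using sp by (simp add: isUnit_def inP_def)
    qed
    show False using hensel[OF two al su sp] ns by blast
  qed
qed

end


lemma M2o_mk2: "mk2 a b c d \<in> M2o nu \<longleftrightarrow> inO nu a \<and> inO nu b \<and> inO nu c \<and> inO nu d"
  by (simp add: M2o_def forall_2)

lemma KT_mk2: "mk2 a b c d \<in> KT nu alpha n \<longleftrightarrow>
   inO nu a \<and> inO nu b \<and> inO nu c \<and> inO nu d \<and> isUnit nu (a*d - b*c) \<and>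
   inP nu (int n) (a - d) \<and> inP nu (int n) (c + b * alpha)"
  by (auto simp: KT_def GL2o_def M2o_mk2 det_mk2)

lemma ZKT_I: "z \<noteq> 0 \<Longrightarrow> k \<in> KT nu alpha n \<Longrightarrow> mat z ** k \<in> ZKT nu alpha n"
  by (auto simp: ZKT_def centre_def)

lemma KT_ZKT: "k \<in> KT nu alpha n \<Longrightarrow> k \<in> ZKT nu alpha n"
  using ZKT_I[of 1 k] by simp

context vf
begin

lemma scale_pair:
  assumes "(x, y) \<noteq> (0::'f, 0)"
  shows "\<exists>c x' y'. c \<noteq> 0 \<and> x = c * x' \<and> y = c * y' \<and> inO nu x' \<and> inO nu y' \<and> (isUnit nu x' \<or> isUnit nu y')"
proof (cases "x \<noteq> 0 \<and> (y = 0 \<or> nu x \<le> nu y)")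
  case True
  have "inO nu (y / x)"
    using True by (cases "y = 0") (auto simp: inO_def inP_def nu_div)
  thus ?thesis using True by (intro exI[of _ x] exI[of _ 1] exI[of _ "y/x"]) auto
next
  case False
  hence y: "y \<noteq> 0" using assms by auto
  have "inO nu (x / y)"
    using False y by (cases "x = 0") (auto simp: inO_def inP_def nu_div)
  thus ?thesis using y by (intro exI[of _ y] exI[of _ "x/y"] exI[of _ 1]) auto
qed

lemma decomp:
  assumes al: "alpha \<noteq> 0" and ns: "\<not> (\<exists>s. s^2 = - alpha)" and g: "det (g::'f^2^2) \<noteq> 0"
  shows "\<exists>x y u q. (x, y) \<noteq> (0, 0) \<and> u \<noteq> 0 \<and> g = mk2 x y (- alpha * y) x ** mk2 u q 0 1"
proof -
  define a b c d where "a = g$1$1" "b = g$1$2" "c = g$2$1" "d = g$2$2"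
  have gg: "g = mk2 a b c d" using mk2_eta[of g] by (simp add: a_b_c_d_def)
  have D: "a*d - b*c \<noteq> 0" using g by (simp add: gg det_mk2)
  have N: "alpha * a^2 + c^2 \<noteq> 0"
  proof
    assume e: "alpha * a^2 + c^2 = 0"
    show False
    proof (cases "a = 0")
      case True thus False using e D by simp
    next
      case False
      have "(c / a)^2 = - alpha" using e False by (simp add: field_simps power2_eq_square) (simp add: algebra_simps eq_neg_iff_add_eq_0)
      thus False using ns by blast
    qed
  qed
  define D where "D = a*d - b*c"
  define N0 where "N0 = a*a*alpha + c*c"
  have N0: "N0 \<noteq> 0" using N by (simp add: N0_def power2_eq_square algebra_simps)
  have D0: "D \<noteq> 0" using D by (simp add: D_def)
  define u where "u = N0 / (alpha * D)"
  define q where "q = (c*d + alpha*a*b) / (alpha*D)"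
  define x where "x = a * alpha * D / N0"
  define y where "y = - c * D / N0"
  have u0: "u \<noteq> 0" using N0 D0 al by (simp add: u_def)
  have xy: "(x, y) \<noteq> (0, 0)" using D0 N0 al D by (auto simp: x_def y_def)
  have e1: "x * u + y * 0 = a" using N0 D0 al by (simp add: x_def u_def field_simps)
  have xq: "x * q = a*(c*d+alpha*a*b)/N0" using N0 D0 al by (simp add: x_def q_def field_simps)
  have n2: "a*(c*d+alpha*a*b) - c*D = b*N0" by (simp add: D_def N0_def algebra_simps)
  have e2: "x * q + y * 1 = b" using N0
  proof -
    have "x * q + y * 1 = (a*(c*d+alpha*a*b) - c*D)/N0" by (simp add: xq y_def diff_divide_distrib)
    also have "\<dots> = b" using n2 N0 by simp
    finally show ?thesis .
  qed
  have e3: "- alpha * y * u + x * 0 = c" using N0 D0 al by (simp add: y_def u_def field_simps)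
  have yq: "- alpha * y * q = c*(c*d+alpha*a*b)/N0" unfolding y_def q_def using N0 D0 al by (simp add: field_simps)
  have n4: "c*(c*d+alpha*a*b) + a*alpha*D = d*N0" by (simp add: D_def N0_def algebra_simps)
  have e4: "- alpha * y * q + x * 1 = d" using N0
  proof -
    have "- alpha * y * q + x * 1 = (c*(c*d+alpha*a*b) + a*alpha*D)/N0" unfolding yq by (simp add: x_def add_divide_distrib)
    also have "\<dots> = d" using n4 N0 by simp
    finally show ?thesis .
  qed
  have "g = mk2 x y (- alpha * y) x ** mk2 u q 0 1"
    unfolding gg mk2_mult mk2_eq_iff using e1 e2 e3 e4 by simp
  thus ?thesis using xy u0 by blast
qed


lemma torus_ZKT:
  assumes two: "isUnit nu (2::'f)" and al: "isUnit nu alpha" and ns: "\<not> (\<exists>s. s^2 = - alpha)"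
    and xy: "(x, y) \<noteq> (0, 0)"
  shows "mk2 x y (- alpha * y) x \<in> ZKT nu alpha n"
proof -
  obtain c x' y' where c: "c \<noteq> 0" "x = c * x'" "y = c * y'" "inO nu x'" "inO nu y'"
    "isUnit nu x' \<or> isUnit nu y'" using scale_pair[OF xy] by blast
  have N: "isUnit nu (x'^2 + alpha * y'^2)" using norm_unit[OF two al ns c(4-6)] .
  have k: "mk2 x' y' (- alpha * y') x' \<in> KT nu alpha n"
    unfolding KT_mk2 using c N isUnit_inO[OF al]
    by (auto intro!: inO_mult simp: power2_eq_square algebra_simps)
  have "mk2 x y (- alpha * y) x = mat c ** mk2 x' y' (- alpha * y') x'"
    by (simp add: mat_mk2 mk2_mult c mult.left_commute)
  thus ?thesis using ZKT_I[OF c(1) k] by simp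
qed

lemma unit_norm_integral:
  assumes two: "isUnit nu (2::'f)" and al: "isUnit nu alpha" and ns: "\<not> (\<exists>s. s^2 = - alpha)"
    and xy: "(x, y) \<noteq> (0, 0)" and N: "isUnit nu (x^2 + alpha * y^2)"
  shows "inO nu x \<and> inO nu y"
proof -
  obtain c x' y' where c: "c \<noteq> 0" "x = c * x'" "y = c * y'" "inO nu x'" "inO nu y'"
    "isUnit nu x' \<or> isUnit nu y'" using scale_pair[OF xy] by blast
  have N': "isUnit nu (x'^2 + alpha * y'^2)" using norm_unit[OF two al ns c(4-6)] .
  have e: "x^2 + alpha * y^2 = (c * c) * (x'^2 + alpha * y'^2)"
    by (simp add: c power2_eq_square algebra_simps)
  have "nu (x^2 + alpha * y^2) = nu c + nu c"
    using N' c(1) unfolding e by (simp add: nu_mult isUnit_def)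
  hence "nu c = 0" using N by (simp add: isUnit_def)
  hence "inO nu c" using c(1) by (simp add: inO_def inP_def)
  thus ?thesis using c by (auto intro: inO_mult)
qed

lemma det_one_plus:
  assumes W: "inP nu 1 W" and g: "inO nu g1" "inO nu g2" "inO nu g3" "inO nu g4"
  shows "isUnit nu ((1 + W*g1) * (1 + W*g4) - W*g2 * (W*g3))"
proof -
  have e: "(1 + W*g1) * (1 + W*g4) - W*g2 * (W*g3) = 1 + W * (g1 + g4 + W*g1*g4 - W*g2*g3)"
    by (simp add: algebra_simps)
  have "inO nu W" using W inP_mono by (auto simp: inO_def)
  hence "inO nu (g1 + g4 + W*g1*g4 - W*g2*g3)" using g by (intro inO_add inO_diff inO_mult) auto
  hence "inP nu 1 (W * (g1 + g4 + W*g1*g4 - W*g2*g3))" using inP_mult0' W by blast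
  thus ?thesis unfolding e by (rule isUnit_one_plus)
qed


lemma one_plus_mk2: "mat 1 + mat W ** mk2 g1 g2 g3 g4 = mk2 (1 + W*g1) (W*g2) (W*g3) (1 + W*(g4::'f))"
  by (simp add: mat_mk2 mk2_mult mk2_add)

lemma trace_walpha: "trace (w_alpha alpha ** mk2 g1 g2 g3 g4) = g3 - alpha * (g2::'f)"
  by (simp add: w_alpha_def mk2_mult trace_mk2)

lemma chiT_val:
  assumes two: "isUnit nu (2::'f)" and al: "isUnit nu alpha" and ns: "\<not> (\<exists>s. s^2 = - alpha)"
    and w: "w \<noteq> 0" "nu w = 1" and n: "n \<ge> 1"
    and psi_add: "\<forall>x y. psi (x + y) = psi x * psi y" and psi_o: "\<forall>x. inO nu x \<longrightarrow> psi x = 1"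
    and th1: "\<forall>x. x \<noteq> 0 \<longrightarrow> theta (x, 0) = 1"
    and acond: "\<forall>u1 u2. inO nu u1 \<and> inO nu u2 \<longrightarrow>
         psi (etr (emul alpha (inverse w ^ n * a, 0) (emul alpha (0, 1) (u1, u2))))
           = theta (1 + w ^ n * u1, w ^ n * u2)"
    and ao: "inO nu a"
    and X: "X \<in> M2o nu"
  shows "chiT nu w alpha psi theta a n (mat 1 + mat (w^n) ** X) = psi (inverse w ^ n * a * trace (w_alpha alpha ** X))"
  unfolding chiT_def
proof (rule some_equality)
  show "\<exists>x y g. (x, y) \<noteq> (0, 0) \<and> g \<in> M2o nu \<and>
      mat 1 + mat (w ^ n) ** X = mk2 x y (- alpha * y) x ** (mat 1 + mat (w ^ n) ** g) \<and>
      psi (inverse w ^ n * a * trace (w_alpha alpha ** X)) =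
      theta (x, y) * psi (inverse w ^ n * a * trace (w_alpha alpha ** g))"
    using X th1 by (intro exI[of _ 1] exI[of _ 0] exI[of _ X]) (simp add: mat_mk2[symmetric])
next
  fix c assume "\<exists>x y g. (x, y) \<noteq> (0, 0) \<and> g \<in> M2o nu \<and>
      mat 1 + mat (w ^ n) ** X = mk2 x y (- alpha * y) x ** (mat 1 + mat (w ^ n) ** g) \<and>
      c = theta (x, y) * psi (inverse w ^ n * a * trace (w_alpha alpha ** g))"
  then obtain x y g where xy: "(x, y) \<noteq> (0, 0)" and g: "g \<in> M2o nu"
    and eq: "mat 1 + mat (w ^ n) ** X = mk2 x y (- alpha * y) x ** (mat 1 + mat (w ^ n) ** g)"
    and c: "c = theta (x, y) * psi (inverse w ^ n * a * trace (w_alpha alpha ** g))" by blast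
  define W where "W = w ^ n"
  have W0: "W \<noteq> 0" using w by (simp add: W_def)
  have Wp: "inP nu 1 W" using w n by (simp add: W_def inP_def nu_pow)
  have WO: "inO nu W" using Wp inP_mono by (auto simp: inO_def)
  have iW: "inverse w ^ n * W = 1" using w by (simp add: W_def power_inverse)
  obtain g1 g2 g3 g4 where gg: "g = mk2 g1 g2 g3 g4" using mk2_eta by blast
  obtain X1 X2 X3 X4 where XX: "X = mk2 X1 X2 X3 X4" using mk2_eta by blast
  have go: "inO nu g1" "inO nu g2" "inO nu g3" "inO nu g4" using g by (auto simp: gg M2o_mk2)
  have Xo: "inO nu X1" "inO nu X2" "inO nu X3" "inO nu X4" using X by (auto simp: XX M2o_mk2)
  have eq': "mk2 (1 + W*X1) (W*X2) (W*X3) (1 + W*X4) =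
     mk2 x y (- alpha * y) x ** mk2 (1 + W*g1) (W*g2) (W*g3) (1 + W*g4)"
    using eq by (simp add: gg XX one_plus_mk2 W_def)
  have E1: "1 + W*X1 = x * (1 + W*g1) + y * (W*g3)"
   and E2: "W*X2 = x * (W*g2) + y * (1 + W*g4)"
   and E3: "W*X3 = - alpha * y * (1 + W*g1) + x * (W*g3)"
   and E4: "1 + W*X4 = - alpha * y * (W*g2) + x * (1 + W*g4)"
    using eq' unfolding mk2_mult mk2_eq_iff by auto
  have dets: "(1 + W*X1) * (1 + W*X4) - W*X2 * (W*X3) =
      (x * x - y * (- alpha * y)) * ((1 + W*g1) * (1 + W*g4) - W*g2 * (W*g3))"
    using arg_cong[OF eq', of det] by (simp add: det_mul det_mk2)
  have dX: "isUnit nu ((1 + W*X1) * (1 + W*X4) - W*X2 * (W*X3))" by (rule det_one_plus[OF Wp Xo])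
  have dg: "isUnit nu ((1 + W*g1) * (1 + W*g4) - W*g2 * (W*g3))" by (rule det_one_plus[OF Wp go])
  have Nxy: "isUnit nu (x^2 + alpha * y^2)"
  proof -
    define N where "N = x * x - y * (- alpha * y)"
    have "N \<noteq> 0" using dX dets by (auto simp: N_def isUnit_def)
    hence "nu N = 0" using dX dg dets nu_mult[of N] by (auto simp: N_def isUnit_def)
    moreover have "N = x^2 + alpha * y^2" by (simp add: N_def power2_eq_square)
    ultimately show ?thesis using \<open>N \<noteq> 0\<close> by (simp add: isUnit_def)
  qed
  have xyo: "inO nu x" "inO nu y" using unit_norm_integral[OF two al ns xy Nxy] by auto
  define u1 where "u1 = X1 - x * g1 - y * g3"
  define u2 where "u2 = X2 - x * g2 - y * g4"
  have u1o: "inO nu u1" using Xo go xyo by (auto simp: u1_def intro!: inO_diff inO_mult)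
  have u2o: "inO nu u2" using Xo go xyo by (auto simp: u2_def intro!: inO_diff inO_mult)
  have xe: "x = 1 + W * u1" using E1 by (simp add: u1_def algebra_simps)
  have ye: "y = W * u2" using E2 by (simp add: u2_def algebra_simps)
  have X2e: "X2 = x * g2 + u2 * (1 + W * g4)"
    using E2 W0 unfolding ye by (simp add: algebra_simps) (metis mult_left_cancel W0 distrib_left mult.assoc mult.left_commute)
  have X3e: "X3 = - alpha * u2 * (1 + W * g1) + x * g3"
    using E3 W0 unfolding ye by (simp add: algebra_simps) (metis mult_left_cancel W0 distrib_left mult.assoc mult.left_commute)
  define r where "r = u1 * (g3 - alpha * g2) - alpha * u2 * (g1 + g4)"
  have ro: "inO nu r" using u1o u2o go isUnit_inO[OF al]
    by (auto simp: r_def intro!: inO_diff inO_mult inO_add)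
  have tr: "X3 - alpha * X2 = - 2 * alpha * u2 + (g3 - alpha * g2) + W * r"
    by (simp add: X2e X3e xe r_def algebra_simps)
  have th: "theta (x, y) = psi (inverse w ^ n * a * (- 2 * alpha * u2))"
  proof -
    have "theta (x, y) = theta (1 + w ^ n * u1, w ^ n * u2)" by (simp add: xe ye W_def)
    also have "\<dots> = psi (etr (emul alpha (inverse w ^ n * a, 0) (emul alpha (0, 1) (u1, u2))))"
      using acond u1o u2o by simp
    also have "etr (emul alpha (inverse w ^ n * a, 0) (emul alpha (0, 1) (u1, u2))) = inverse w ^ n * a * (- 2 * alpha * u2)"
      by (simp add: etr_def emul_def algebra_simps)
    finally show ?thesis .
  qed
  have trx: "inverse w ^ n * a * trace (w_alpha alpha ** X) =
     inverse w ^ n * a * (- 2 * alpha * u2) + inverse w ^ n * a * trace (w_alpha alpha ** g) + a * r"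
    unfolding XX gg trace_walpha tr using iW by (simp add: algebra_simps)
  have pa: "\<And>A B C. psi (A + B + C) = psi A * psi B * psi C" using psi_add by simp
  have "psi (inverse w ^ n * a * trace (w_alpha alpha ** X)) =
     theta (x, y) * psi (inverse w ^ n * a * trace (w_alpha alpha ** g)) * psi (a * r)"
    unfolding trx pa th ..
  moreover have "psi (a * r) = 1" using psi_o inO_mult[OF ao ro] by simp
  ultimately show "c = psi (inverse w ^ n * a * trace (w_alpha alpha ** X))" using c by simp
qed

end

lemma ip_facts:
  assumes ip: "invariant_inner_product sc rho ip"
  shows "ip (sc c v) w = c * ip v w" "ip w (sc c v) = cnj c * ip w v"
    "v \<noteq> 0 \<Longrightarrow> ip v v \<noteq> 0"
    "g \<in> GL2 \<Longrightarrow> ip (rho g v) (rho g w) = ip v w"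
proof -
  show a: "ip (sc c v) w = c * ip v w" using ip unfolding invariant_inner_product_def by blast
  have "ip w (sc c v) = cnj (ip (sc c v) w)" using ip unfolding invariant_inner_product_def by metis
  also have "\<dots> = cnj c * cnj (ip v w)" by (simp add: a)
  also have "cnj (ip v w) = ip w v" using ip unfolding invariant_inner_product_def by metis
  finally show "ip w (sc c v) = cnj c * ip w v" .
  show "v \<noteq> 0 \<Longrightarrow> ip v v \<noteq> 0" using ip unfolding invariant_inner_product_def
    by (metis less_irrefl zero_complex.simps(1))
  show "g \<in> GL2 \<Longrightarrow> ip (rho g v) (rho g w) = ip v w" using ip unfolding invariant_inner_product_def by blast
qed

lemma eigen_unit:
  assumes ip: "invariant_inner_product sc rho ip" and v0: "v0 \<noteq> 0"
    and k: "k \<in> GL2" and ev: "rho k v0 = sc c v0"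
  shows "c * cnj c = 1"
proof -
  have "ip v0 v0 = ip (rho k v0) (rho k v0)" using ip_facts(4)[OF ip k] by simp
  also have "\<dots> = c * cnj c * ip v0 v0" using ip_facts(1,2)[OF ip] by (simp add: ev)
  finally show ?thesis using ip_facts(3)[OF ip v0] by simp
qed

lemma no_intertwine:
  assumes rep: "is_rep sc rho" and ip: "invariant_inner_product sc rho ip"
   and v0ne: "v0 \<noteq> 0" and ev: "\<forall>k\<in>H. rho k v0 = sc (chi k) v0" and HG: "H \<subseteq> GL2"
   and g: "g \<in> GL2" and k: "k \<in> H" "k' \<in> H" and comm: "k ** g = g ** k'" and ne: "chi k \<noteq> chi k'"
  shows "ip (rho g v0) v0 = 0"
proof (rule ccontr)
  assume nz: "ip (rho g v0) v0 \<noteq> 0"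
  have kG: "k \<in> GL2" "k' \<in> GL2" using k HG by auto
  have comp: "\<forall>g\<in>GL2. \<forall>h\<in>GL2. rho (g ** h) = rho g \<circ> rho h"
    and lin: "\<forall>g\<in>GL2. \<forall>c v. rho g (sc c v) = sc c (rho g v)"
    using rep unfolding is_rep_def by blast+
  have "rho k (rho g v0) = rho (k ** g) v0" using comp kG g by simp
  also have "\<dots> = rho g (rho k' v0)" using comp kG g by (simp add: comm)
  also have "\<dots> = sc (chi k') (rho g v0)" using lin g ev k by simp
  finally have e1: "rho k (rho g v0) = sc (chi k') (rho g v0)" .
  have "ip (rho g v0) v0 = ip (rho k (rho g v0)) (rho k v0)" using ip_facts(4)[OF ip kG(1)] by simp
  also have "\<dots> = chi k' * cnj (chi k) * ip (rho g v0) v0"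
    using ip_facts(1,2)[OF ip] ev k by (simp add: e1)
  finally have "chi k' * cnj (chi k) = 1" using nz by simp
  moreover have "chi k * cnj (chi k) = 1" using eigen_unit[OF ip v0ne kG(1)] ev k by simp
  ultimately have "chi k' * cnj (chi k) = chi k * cnj (chi k)" by simp
  moreover have "cnj (chi k) \<noteq> 0" using \<open>chi k * cnj (chi k) = 1\<close> by auto
  ultimately show False using ne by simp
qed

lemma ZKT_GL2: "ZKT nu alpha n \<subseteq> GL2"
proof
  fix g assume "g \<in> ZKT nu alpha n"
  then obtain z k where g: "g = mat z ** k" "z \<noteq> 0" "k \<in> KT nu alpha n"
    by (auto simp: ZKT_def centre_def)
  have "det k \<noteq> 0" using g(3) by (auto simp: KT_def GL2o_def isUnit_def)
  moreover have "det (mat z :: 'a^2^2) \<noteq> 0" using g(2) by (simp add: mat_mk2 det_mk2)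
  ultimately show "g \<in> GL2" by (simp add: GL2_def g det_mul)
qed


locale pc = vf nu for nu :: "'f::field_char_0 \<Rightarrow> int" +
  fixes alpha w a :: 'f and n :: nat and psi :: "'f \<Rightarrow> complex" and theta :: "'f \<times> 'f \<Rightarrow> complex"
  assumes two: "isUnit nu (2::'f)" and al: "isUnit nu alpha" and ns: "\<not> (\<exists>s. s^2 = - alpha)"
    and w: "w \<noteq> 0" "nu w = 1" and n: "n \<ge> 1"
    and psi_add: "\<forall>x y. psi (x + y) = psi x * psi y" and psi_o: "\<forall>x. inO nu x \<longrightarrow> psi x = 1"
    and psi_nt: "\<exists>x. inO nu x \<and> psi (inverse w * x) \<noteq> 1"
    and th1: "\<forall>x. x \<noteq> 0 \<longrightarrow> theta (x, 0) = 1"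
    and acond: "\<forall>u1 u2. inO nu u1 \<and> inO nu u2 \<longrightarrow>
         psi (etr (emul alpha (inverse w ^ n * a, 0) (emul alpha (0, 1) (u1, u2))))
           = theta (1 + w ^ n * u1, w ^ n * u2)"
    and au: "isUnit nu a"
begin

abbreviation "chi \<equiv> chiT nu w alpha psi theta a n"

definition beta where "beta = inverse w ^ n * a * (- alpha) / w ^ n"

lemma beta0: "beta \<noteq> 0" and nu_beta: "nu beta = - 2 * int n"
proof -
  have a0: "a \<noteq> 0" "alpha \<noteq> 0" using au al by (auto simp: isUnit_def)
  show "beta \<noteq> 0" using a0 w by (simp add: beta_def)
  show "nu beta = - 2 * int n" using a0 w au al
    by (simp add: beta_def nu_div nu_mult nu_pow nu_inv isUnit_def)
qed

lemma psi0: "psi 0 = 1" using psi_o by simp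

lemma psi_ne0: "psi x \<noteq> 0"
proof
  assume "psi x = 0"
  moreover have "psi (x + - x) = psi x * psi (- x)" using psi_add by blast
  ultimately show False using psi0 by simp
qed

lemma psi_shift: "psi A \<noteq> 1 \<Longrightarrow> psi (A + B) \<noteq> psi B"
  using psi_add psi_ne0[of B] by simp

lemma inP_div_W: "inP nu (int n) z \<Longrightarrow> inO nu (z / w ^ n)"
  using w by (cases "z = 0") (auto simp: inO_def inP_def nu_div nu_pow)

lemma upper_KT: "inP nu (int n) z1 \<Longrightarrow> inP nu (int n) z2 \<Longrightarrow> mk2 (1 + z1) z2 0 1 \<in> KT nu alpha n"
proof -
  assume z: "inP nu (int n) z1" "inP nu (int n) z2"
  have p: "inP nu 1 z1" "inP nu 0 z1" "inP nu 0 z2" using z n inP_mono by fastforce+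
  have o: "inO nu z1" "inO nu z2" using p by (auto simp: inO_def)
  show ?thesis unfolding KT_mk2
    using o z isUnit_one_plus[OF p(1)] isUnit_inO[OF isUnit_one_plus[OF p(1)]] inP_mult0'[OF z(2) isUnit_inO[OF al]]
    by auto
qed

lemma upper_chi: "inP nu (int n) z1 \<Longrightarrow> inP nu (int n) z2 \<Longrightarrow> chi (mk2 (1 + z1) z2 0 1) = psi (beta * z2)"
proof -
  assume z: "inP nu (int n) z1" "inP nu (int n) z2"
  define X where "X = mk2 (z1 / w^n) (z2 / w^n) 0 (0::'f)"
  have X: "X \<in> M2o nu" using inP_div_W z by (simp add: X_def M2o_mk2)
  have e: "mat 1 + mat (w^n) ** X = mk2 (1 + z1) z2 0 1" using w by (simp add: X_def one_plus_mk2)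
  have "chi (mat 1 + mat (w^n) ** X) = psi (inverse w ^ n * a * trace (w_alpha alpha ** X))"
    by (rule chiT_val[OF two al ns w n psi_add psi_o th1 acond isUnit_inO[OF au] X])
  also have "inverse w ^ n * a * trace (w_alpha alpha ** X) = beta * z2"
    by (simp add: X_def trace_walpha beta_def)
  finally show ?thesis using e by simp
qed


lemma case_b:
  assumes u0: "u \<noteq> 0" and nb: "\<not> (isUnit nu u \<and> inP nu (int n) (u - 1) \<and> inP nu (int n) q)"
  shows "(u \<noteq> 1 \<and> nu (u - 1) < int n \<and> nu (u - 1) - nu u < int n) \<or> (q \<noteq> 0 \<and> nu q - nu u < int n)"
proof (rule ccontr)
  assume h: "\<not> ?thesis"
  show False
  proof (cases "u = 1")
    case True
    hence "inP nu (int n) q" using h by (auto simp: inP_def)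
    thus False using nb True by simp
  next
    case u1: False
    have big: "int n \<le> nu (u - 1) \<and> nu u = 0"
    proof (cases "int n \<le> nu (u - 1)")
      case True
      hence "inP nu 1 (u - 1)" using n by (simp add: inP_def)
      hence "isUnit nu (1 + (u - 1))" by (rule isUnit_one_plus)
      thus ?thesis using True by (simp add: isUnit_def)
    next
      case False
      hence d: "nu (u - 1) - nu u \<ge> int n" using h u1 by auto
      have "nu u = 0"
      proof (rule ccontr)
        assume "nu u \<noteq> 0"
        then consider "nu u > 0" | "nu u < 0" by linarith
        thus False
        proof cases
          case 1
          hence "inP nu (nu (-1) + 1) u" using u0 by (simp add: inP_def)
          hence "nu (-1 + u) = nu (-1::'f)" by (intro ultra_eq) simp_all
          hence "nu (u - 1) = 0" by simp
          thus False using d 1 n by simp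
        next
          case 2
          hence "inP nu (nu u + 1) (-1)" by (simp add: inP_def)
          hence "nu (u + -1) = nu u" using u0 by (intro ultra_eq) simp_all
          hence "nu (u - 1) = nu u" by simp
          thus False using d n by simp
        qed
      qed
      thus ?thesis using d by simp
    qed
    have "isUnit nu u" using big u0 by (simp add: isUnit_def)
    moreover have "inP nu (int n) (u - 1)" using big by (simp add: inP_def)
    moreover have "inP nu (int n) q" using h big u1 by (auto simp: inP_def)
    ultimately show False using nb by simp
  qed
qed

lemma torus_times:
  assumes xy: "(x, y) \<noteq> (0, 0)" and uu: "isUnit nu u" "inP nu (int n) (u - 1)" "inP nu (int n) q"
  shows "mk2 x y (- alpha * y) x ** mk2 u q 0 1 \<in> ZKT nu alpha n"
proof -
  obtain c x' y' where c: "c \<noteq> 0" "x = c * x'" "y = c * y'" "inO nu x'" "inO nu y'"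
    "isUnit nu x' \<or> isUnit nu y'" using scale_pair[OF xy] by blast
  have N: "isUnit nu (x'^2 + alpha * y'^2)" using norm_unit[OF two al ns c(4-6)] .
  have ao: "inO nu alpha" using isUnit_inO[OF al] .
  have uo: "inO nu u" using isUnit_inO[OF uu(1)] .
  have qo: "inO nu q" using uu(3) inP_mono[of "int n" q 0] by (simp add: inO_def)
  define A where "A = x' * u"
  define B where "B = x' * q + y'"
  define C where "C = - alpha * y' * u"
  define D where "D = - alpha * y' * q + x'"
  have prod: "mk2 x' y' (- alpha * y') x' ** mk2 u q 0 1 = mk2 A B C D"
    by (simp add: mk2_mult A_def B_def C_def D_def)
  have dd: "A * D - B * C = (x'^2 + alpha * y'^2) * u"
    by (simp add: A_def B_def C_def D_def algebra_simps power2_eq_square)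
  have e1: "A - D = x' * (u - 1) + alpha * (y' * q)" by (simp add: A_def D_def algebra_simps)
  have e2: "C + B * alpha = alpha * (x' * q - y' * (u - 1))"
    by (simp add: B_def C_def algebra_simps)
  have p1: "inP nu (int n) (x' * (u - 1) + alpha * (y' * q))"
    using inP_mult0[OF c(4) uu(2)] inP_mult0[OF ao inP_mult0[OF c(5) uu(3)]] by (rule inP_add)
  have p2: "inP nu (int n) (alpha * (x' * q - y' * (u - 1)))"
    using inP_mult0[OF ao inP_diff[OF inP_mult0[OF c(4) uu(3)] inP_mult0[OF c(5) uu(2)]]] .
  have oA: "inO nu A" "inO nu B" "inO nu C" "inO nu D"
    using c uo qo ao by (auto simp: A_def B_def C_def D_def intro!: inO_mult inO_add inO_diff)
  have k: "mk2 x' y' (- alpha * y') x' ** mk2 u q 0 1 \<in> KT nu alpha n"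
    unfolding prod KT_mk2 dd e1 e2 using oA p1 p2 isUnit_mult[OF N uu(1)] by blast
  have "mk2 x y (- alpha * y) x = mat c ** mk2 x' y' (- alpha * y') x'"
    by (simp add: mat_mk2 mk2_mult c mult.left_commute)
  hence "mk2 x y (- alpha * y) x ** mk2 u q 0 1 = mat c ** (mk2 x' y' (- alpha * y') x' ** mk2 u q 0 1)"
    by (simp add: matrix_mul_assoc)
  thus ?thesis using ZKT_I[OF c(1) k] by simp
qed


lemma key_b:
  assumes u0: "u \<noteq> 0" and nb: "\<not> (isUnit nu u \<and> inP nu (int n) (u - 1) \<and> inP nu (int n) q)"
  shows "\<exists>k k'. k \<in> KT nu alpha n \<and> k' \<in> KT nu alpha n \<and> k ** mk2 u q 0 1 = mk2 u q 0 1 ** k' \<and> chi k \<noteq> chi k'"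
proof -
  obtain z0 where z0: "inO nu z0" "psi (inverse w * z0) \<noteq> 1" using psi_nt by blast
  have z00: "z0 \<noteq> 0" using z0 psi0 by auto
  have nz0: "nu z0 \<ge> 0" using z0 z00 by (simp add: inO_def inP_def)
  have iw: "inverse w \<noteq> 0" "nu (inverse w) = -1" using w by (simp_all add: nu_inv)
  note b = beta0 nu_beta
  from case_b[OF u0 nb] show ?thesis
  proof
    assume P: "u \<noteq> 1 \<and> nu (u - 1) < int n \<and> nu (u - 1) - nu u < int n"
    have u1: "u - 1 \<noteq> 0" using P by simp
    define z where "z = inverse w * z0 * u / (beta * (u - 1))"
    have z_0: "z \<noteq> 0" using iw z00 u0 b u1 by (simp add: z_def)
    have nuz: "nu z = nu z0 + nu u + 2 * int n - 1 - nu (u - 1)"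
      using iw z00 u0 b u1 by (simp add: z_def nu_mult nu_div)
    have pz: "inP nu (int n) z" using z_0 nuz P nz0 by (simp add: inP_def)
    have pz': "inP nu (int n) (z / u)" using z_0 nuz P nz0 u0 by (simp add: inP_def nu_div)
    define k where "k = mk2 (1 + 0) z 0 (1::'f)"
    define k' where "k' = mk2 (1 + 0) (z / u) 0 (1::'f)"
    have kK: "k \<in> KT nu alpha n" "k' \<in> KT nu alpha n"
      unfolding k_def k'_def using upper_KT[OF inP_0 pz] upper_KT[OF inP_0 pz'] by auto
    have ck: "chi k = psi (beta * z)" unfolding k_def using upper_chi[OF inP_0 pz] by simp
    have ck': "chi k' = psi (beta * (z / u))" unfolding k'_def using upper_chi[OF inP_0 pz'] by simp
    have "beta * z = inverse w * z0 + beta * (z / u)"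
    proof -
      define c where "c = inverse w * z0"
      define d where "d = u - 1"
      have d0: "d \<noteq> 0" and ud: "u = d + 1" using u1 by (simp_all add: d_def)
      have "beta * z = c * u / d" using b by (simp add: z_def c_def d_def)
      also have "\<dots> = c + c / d" using d0 by (simp add: ud field_simps)
      also have "c / d = beta * (z / u)" using b u0 by (simp add: z_def c_def d_def)
      finally show ?thesis by (simp add: c_def)
    qed
    hence "chi k \<noteq> chi k'" unfolding ck ck' using psi_shift[OF z0(2), of "beta * (z / u)"] by metis
    moreover have "k ** mk2 u q 0 1 = mk2 u q 0 1 ** k'"
      using u0 by (simp add: k_def k'_def mk2_mult add.commute)
    ultimately show ?thesis using kK by blast
  next
    assume P: "q \<noteq> 0 \<and> nu q - nu u < int n"
    define z where "z = inverse w * z0 * u / (beta * q)"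
    have z_0: "z \<noteq> 0" using iw z00 u0 b P by (simp add: z_def)
    have nuz: "nu z = nu z0 + nu u + 2 * int n - 1 - nu q"
      using iw z00 u0 b P by (simp add: z_def nu_mult nu_div)
    have pz: "inP nu (int n) z" using z_0 nuz P nz0 by (simp add: inP_def)
    have e: "q * z / u = inverse w * z0 / beta" using u0 P b by (simp add: z_def field_simps)
    have "nu (inverse w * z0 / beta) = nu z0 - 1 + 2 * int n"
      using iw z00 b by (simp add: nu_mult nu_div)
    hence pz': "inP nu (int n) (q * z / u)" unfolding e using iw z00 b nz0 n by (simp add: inP_def)
    define k where "k = mk2 (1 + z) 0 0 (1::'f)"
    define k' where "k' = mk2 (1 + z) (q * z / u) 0 (1::'f)"
    have kK: "k \<in> KT nu alpha n" "k' \<in> KT nu alpha n"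
      unfolding k_def k'_def using upper_KT pz pz' by auto
    have ck: "chi k = 1" unfolding k_def using upper_chi[OF pz inP_0] psi0 by simp
    have ck': "chi k' = psi (inverse w * z0)" unfolding k'_def using upper_chi[OF pz pz'] e b by simp
    have "chi k \<noteq> chi k'" using ck ck' z0 by simp
    moreover have "k ** mk2 u q 0 1 = mk2 u q 0 1 ** k'"
      using u0 by (simp add: k_def k'_def mk2_mult algebra_simps)
    ultimately show ?thesis using kK by blast
  qed
qed

end


theorem proposition3p2:
  fixes nu :: "'f::field_char_0 \<Rightarrow> int" and w alpha a :: 'f and n :: nat
    and psi :: "'f \<Rightarrow> complex" and theta :: "'f \<times> 'f \<Rightarrow> complex"
    and sc :: "complex \<Rightarrow> 'v::ab_group_add \<Rightarrow> 'v" and rho :: "'f^2^2 \<Rightarrow> 'v \<Rightarrow> 'v"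
    and ip :: "'v \<Rightarrow> 'v \<Rightarrow> complex" and Lam :: "'v \<Rightarrow> ('f^2^2 \<Rightarrow> complex)" and v0 :: 'v
  assumes F: "nonarch_local_field nu" and q_odd: "odd (residue_card nu)"
    and unif: "w \<noteq> 0" "nu w = 1"
    and psi: "std_add_char nu w psi"
    and alpha: "isUnit nu alpha" "\<not> (\<exists>s. s ^ 2 = - alpha)"
    and n: "n \<ge> 1"
    and theta: "char_E nu alpha theta" "cond_E nu alpha theta = 2 * n"
      "\<forall>x. x \<noteq> 0 \<longrightarrow> theta (x, 0) = 1"
    and a: "isUnit nu a"
      "\<forall>u1 u2. inO nu u1 \<and> inO nu u2 \<longrightarrow>
         psi (etr (emul alpha (inverse w ^ n * a, 0) (emul alpha (0, 1) (u1, u2))))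
           = theta (1 + w ^ n * u1, w ^ n * u2)"
    and rep: "is_rep sc rho"
    and ip: "invariant_inner_product sc rho ip"
    and sc: "supercuspidal nu sc rho ip"
    and central: "\<forall>z\<in>centre. rho z = id"
    and cond: "conductor nu rho = 4 * n"
    and iso: "\<forall>v v'. Lam (v + v') = (\<lambda>x. Lam v x + Lam v' x)"
      "\<forall>c v. Lam (sc c v) = (\<lambda>x. c * Lam v x)"
      "bij_betw Lam UNIV (cind (ZKT nu alpha n) (chiT nu w alpha psi theta a n))"
      "\<forall>g\<in>GL2. \<forall>v. Lam (rho g v) = (\<lambda>x. Lam v (x ** g))"
    and v0: "minimal_vector sc rho (ZKT nu alpha n) (chiT nu w alpha psi theta a n) v0"
  shows "\<forall>g\<in>GL2. ip (rho g v0) v0 / ip v0 v0 =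
           (if g \<in> ZKT nu alpha n then chiT nu w alpha psi theta a n g else 0)"
proof -
  have vfI: "vf nu" using F by (simp add: vf_def)
  have two: "isUnit nu (2::'f)" using vf.two_unit[OF vfI q_odd] .
  have pcI: "pc nu alpha w a n psi theta"
    unfolding pc_def pc_axioms_def using vfI two alpha unif n psi theta(3) a
    by (auto simp: std_add_char_def)
  interpret P: pc nu alpha w a n psi theta by (rule pcI)
  define chi where "chi = chiT nu w alpha psi theta a n"
  have v0ne: "v0 \<noteq> 0" and ev: "\<forall>k\<in>ZKT nu alpha n. rho k v0 = sc (chi k) v0"
    using v0 by (auto simp: minimal_vector_def chi_def)
  have ipv: "ip v0 v0 \<noteq> 0" using ip_facts(3)[OF ip v0ne] .
  have comp: "\<forall>g\<in>GL2. \<forall>h\<in>GL2. rho (g ** h) = rho g \<circ> rho h"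
    using rep unfolding is_rep_def by blast
  have al0: "alpha \<noteq> 0" using alpha by (simp add: isUnit_def)
  show ?thesis
  proof
    fix g :: "'f^2^2" assume g: "g \<in> GL2"
    show "ip (rho g v0) v0 / ip v0 v0 = (if g \<in> ZKT nu alpha n then chiT nu w alpha psi theta a n g else 0)"
    proof (cases "g \<in> ZKT nu alpha n")
      case True
      have "ip (rho g v0) v0 = chi g * ip v0 v0" using ev True ip_facts(1)[OF ip] by simp
      thus ?thesis using True ipv by (simp add: chi_def)
    next
      case False
      have dg: "det g \<noteq> 0" using g by (simp add: GL2_def)
      obtain x y u q where xy: "(x, y) \<noteq> (0, 0)" and u0: "u \<noteq> 0"
        and gd: "g = mk2 x y (- alpha * y) x ** mk2 u q 0 1"
        using vf.decomp[OF vfI al0 alpha(2) dg] by blast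
      define t where "t = mk2 x y (- alpha * y) x"
      define b where "b = mk2 u q 0 (1::'f)"
      have nb: "\<not> (isUnit nu u \<and> inP nu (int n) (u - 1) \<and> inP nu (int n) q)"
        using P.torus_times[OF xy] False gd by blast
      obtain k k' where kk: "k \<in> KT nu alpha n" "k' \<in> KT nu alpha n"
        "k ** b = b ** k'" "chi k \<noteq> chi k'"
        using P.key_b[OF u0 nb] unfolding b_def chi_def by blast
      have bG: "b \<in> GL2" using u0 by (simp add: b_def GL2_def det_mk2)
      have ib: "ip (rho b v0) v0 = 0"
        by (rule no_intertwine[OF rep ip v0ne ev ZKT_GL2 bG KT_ZKT[OF kk(1)] KT_ZKT[OF kk(2)] kk(3) kk(4)])
      have tZ: "t \<in> ZKT nu alpha n" unfolding t_def by (rule P.torus_ZKT[OF two alpha(1) alpha(2) xy])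
      have tG: "t \<in> GL2" using tZ ZKT_GL2 by blast
      have tev: "rho t v0 = sc (chi t) v0" using ev tZ by blast
      have cu: "chi t * cnj (chi t) = 1" using eigen_unit[OF ip v0ne tG tev] .
      have "ip (rho t (rho b v0)) (rho t v0) = 0" using ip_facts(4)[OF ip tG] ib by simp
      hence "cnj (chi t) * ip (rho t (rho b v0)) v0 = 0" using ip_facts(2)[OF ip] tev by simp
      moreover have "cnj (chi t) \<noteq> 0" using cu by auto
      ultimately have "ip (rho t (rho b v0)) v0 = 0" by simp
      moreover have "rho g = rho t \<circ> rho b" using comp tG bG gd by (simp add: t_def b_def)
      ultimately show ?thesis using False by simp
    qed
  qed
qed

end
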